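(* For integers $d\ge1$ and $s\ge0$, let $G_s^d$ be the number of lattice paths with unit steps $(1,0)$ and $(0,1)$ from $(0,0)$ to $(s,s+d)$ all of whose points other than the endpoint satisfy $x-2<y<x+d$ (the endpoint lies on $y=x+d$). Then for every $\alpha\in(0,1/2)$, $$\sum_{s=0}^\infty G_s^d\,\big(\alpha(1-\alpha)\big)^s=\frac{1-2\alpha}{(1-\alpha)^{d+2}-\alpha^{d+2}},$$ $$\sum_{s=0}^\infty s\,G_s^d\,\big(\alpha(1-\alpha)\big)^s=\frac{(d+2)\alpha(1-\alpha)\big((1-\alpha)^{d+1}+\alpha^{d+1}\big)}{\big((1-\alpha)^{d+2}-\alpha^{d+2}\big)^2}-\frac{2\alpha(1-\alpha)}{(1-2\alpha)\big((1-\alpha)^{d+2}-\alpha^{d+2}\big)}.$$ *)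

theory Defs
  imports Complex_Main
begin

text \<open>A lattice path is a list of unit steps: True = (0,1) (up), False = (1,0) (right).
  The point reached after the first k steps is (number of right steps, number of up steps)
  among the first k steps.\<close>

definition path_pt :: "bool list \<Rightarrow> nat \<Rightarrow> int \<times> int" where
  "path_pt ps k = (int (length (filter Not (take k ps))), int (length (filter id (take k ps))))"

definition G_paths :: "nat \<Rightarrow> nat \<Rightarrow> bool list set" where
  "G_paths d s = {ps. length ps = 2 * s + d \<and> path_pt ps (length ps) = (int s, int (s + d)) \<and>
      (\<forall>k < length ps. fst (path_pt ps k) - 2 < snd (path_pt ps k) \<and>
                        snd (path_pt ps k) < fst (path_pt ps k) + int d)}"

definition G :: "nat \<Rightarrow> nat \<Rightarrow> nat" where
  "G d s = card (G_paths d s)"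

end

theory Submission
  imports Defs
begin


definition zv :: "bool list \<Rightarrow> int" where
  "zv ps = int (length (filter id ps)) - int (length (filter Not ps))"
definition okp :: "nat \<Rightarrow> bool list \<Rightarrow> bool" where
  "okp d ps = (\<forall>k\<le>length ps. -1 \<le> zv (take k ps) \<and> zv (take k ps) \<le> int d - 1)"
definition SS :: "nat \<Rightarrow> nat \<Rightarrow> int \<Rightarrow> bool list set" where
  "SS d n z = {ps. length ps = n \<and> okp d ps \<and> zv ps = z}"
definition wt :: "real \<Rightarrow> real \<Rightarrow> bool list \<Rightarrow> real" where
  "wt p q ps = p ^ length (filter id ps) * q ^ length (filter Not ps)"
definition W :: "nat \<Rightarrow> real \<Rightarrow> real \<Rightarrow> nat \<Rightarrow> int \<Rightarrow> real" where
  "W d p q n z = (\<Sum>ps\<in>SS d n z. wt p q ps)"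

lemma len_TF: "length (filter id xs) + length (filter Not xs) = length xs"
  by (induction xs) auto

lemma finite_SS: "finite (SS d n z)"
proof -
  have "SS d n z \<subseteq> {xs. set xs \<subseteq> UNIV \<and> length xs = n}" by (auto simp: SS_def)
  thus ?thesis using finite_lists_length_eq[of "UNIV::bool set" n] finite_subset by auto
qed

lemma zv_snoc: "zv (ps @ [b]) = zv ps + (if b then 1 else -1)"
  by (cases b) (auto simp: zv_def)

lemma okp_snoc: "okp d (ps @ [b]) \<longleftrightarrow> okp d ps \<and> -1 \<le> zv (ps @ [b]) \<and> zv (ps @ [b]) \<le> int d - 1"
proof
  assume H: "okp d (ps @ [b])"
  have "okp d ps" unfolding okp_def
  proof (intro allI impI)
    fix k assume "k \<le> length ps"
    then have "take k (ps @ [b]) = take k ps" by simp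
    with H \<open>k \<le> length ps\<close> show "-1 \<le> zv (take k ps) \<and> zv (take k ps) \<le> int d - 1"
      unfolding okp_def by (metis le_SucI length_append_singleton)
  qed
  moreover have "-1 \<le> zv (ps @ [b]) \<and> zv (ps @ [b]) \<le> int d - 1"
    using H unfolding okp_def by (metis order_refl take_all)
  ultimately show "okp d ps \<and> -1 \<le> zv (ps @ [b]) \<and> zv (ps @ [b]) \<le> int d - 1" by blast
next
  assume H: "okp d ps \<and> -1 \<le> zv (ps @ [b]) \<and> zv (ps @ [b]) \<le> int d - 1"
  show "okp d (ps @ [b])" unfolding okp_def
  proof (intro allI impI)
    fix k assume k: "k \<le> length (ps @ [b])"
    show "-1 \<le> zv (take k (ps @ [b])) \<and> zv (take k (ps @ [b])) \<le> int d - 1"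
    proof (cases "k \<le> length ps")
      case True
      then show ?thesis using H unfolding okp_def by simp
    next
      case False
      then have "k = length (ps @ [b])" using k by simp
      then show ?thesis using H by simp
    qed
  qed
qed

lemma SS_Suc: "SS d (Suc n) z = (if -1 \<le> z \<and> z \<le> int d - 1 then
   (\<lambda>ps. ps @ [True]) ` SS d n (z - 1) \<union> (\<lambda>ps. ps @ [False]) ` SS d n (z + 1) else {})"
proof (cases "-1 \<le> z \<and> z \<le> int d - 1")
  case True
  show ?thesis
  proof (simp only: if_P[OF True], intro equalityI subsetI)
    fix xs assume "xs \<in> SS d (Suc n) z"
    then have xs: "length xs = Suc n" "okp d xs" "zv xs = z" by (auto simp: SS_def)
    then obtain ps b where pb: "xs = ps @ [b]" by (metis length_Suc_conv_rev)
    show "xs \<in> (\<lambda>ps. ps @ [True]) ` SS d n (z - 1) \<union> (\<lambda>ps. ps @ [False]) ` SS d n (z + 1)"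
    proof (cases b)
      case True
      then have "ps \<in> SS d n (z - 1)" using xs pb okp_snoc[of d ps b] zv_snoc[of ps b]
        by (auto simp: SS_def)
      then show ?thesis using pb True by blast
    next
      case False
      then have "ps \<in> SS d n (z + 1)" using xs pb okp_snoc[of d ps b] zv_snoc[of ps b]
        by (auto simp: SS_def)
      then show ?thesis using pb False by blast
    qed
  next
    fix xs assume "xs \<in> (\<lambda>ps. ps @ [True]) ` SS d n (z - 1) \<union> (\<lambda>ps. ps @ [False]) ` SS d n (z + 1)"
    then show "xs \<in> SS d (Suc n) z"
      using True by (auto simp: SS_def okp_snoc zv_snoc)
  qed
next
  case False
  have "SS d (Suc n) z = {}"
  proof (rule ccontr)
    assume "SS d (Suc n) z \<noteq> {}"
    then obtain xs where "length xs = Suc n" "okp d xs" "zv xs = z" by (auto simp: SS_def)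
    then show False using False unfolding okp_def by (metis order_refl take_all)
  qed
  then show ?thesis by (simp only: if_not_P[OF False])
qed

lemma SS_out: "\<not> (-1 \<le> z \<and> z \<le> int d - 1) \<Longrightarrow> SS d n z = {}"
proof (rule ccontr)
  assume F: "\<not> (-1 \<le> z \<and> z \<le> int d - 1)" and "SS d n z \<noteq> {}"
  then obtain xs where "length xs = n" "okp d xs" "zv xs = z" by (auto simp: SS_def)
  then show False using F unfolding okp_def by (metis order_refl take_all)
qed

lemma W_out: "\<not> (-1 \<le> z \<and> z \<le> int d - 1) \<Longrightarrow> W d p q n z = 0"
  by (simp add: W_def SS_out)

lemma wt_snoc: "wt p q (ps @ [b]) = wt p q ps * (if b then p else q)"
  by (cases b) (auto simp: wt_def)

lemma W_Suc: "W d p q (Suc n) z = (if -1 \<le> z \<and> z \<le> int d - 1 then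
   p * W d p q n (z - 1) + q * W d p q n (z + 1) else 0)"
proof (cases "-1 \<le> z \<and> z \<le> int d - 1")
  case True
  have inj1: "inj_on (\<lambda>ps. ps @ [b]) A" for b :: bool and A by (auto simp: inj_on_def)
  have disj: "(\<lambda>ps. ps @ [True]) ` SS d n (z - 1) \<inter> (\<lambda>ps. ps @ [False]) ` SS d n (z + 1) = {}" by auto
  have "W d p q (Suc n) z = (\<Sum>ps\<in>(\<lambda>ps. ps @ [True]) ` SS d n (z - 1). wt p q ps)
      + (\<Sum>ps\<in>(\<lambda>ps. ps @ [False]) ` SS d n (z + 1). wt p q ps)"
    unfolding W_def SS_Suc using True disj finite_SS by (simp add: sum.union_disjoint)
  also have "\<dots> = p * W d p q n (z - 1) + q * W d p q n (z + 1)"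
    by (simp add: sum.reindex[OF inj1] W_def wt_snoc sum_distrib_left sum_distrib_right mult.commute)
  finally show ?thesis using True by simp
next
  case False
  have "SS d (Suc n) z = {}" by (rule SS_out[OF False])
  then show ?thesis unfolding W_def by (simp only: if_not_P[OF False] sum.empty)
qed

lemma W_0: "d \<ge> 1 \<Longrightarrow> W d p q 0 z = (if z = 0 then 1 else 0)"
proof -
  assume d: "d \<ge> 1"
  have "SS d 0 z = (if z = 0 then {[]} else {})"
    using d by (auto simp: SS_def okp_def zv_def)
  then show ?thesis by (simp add: W_def wt_def)
qed

lemma W_nonneg: "0 \<le> p \<Longrightarrow> 0 \<le> q \<Longrightarrow> 0 \<le> W d p q n z"
  unfolding W_def wt_def by (intro sum_nonneg) auto




definition Phi :: "nat \<Rightarrow> real \<Rightarrow> real \<Rightarrow> nat \<Rightarrow> (int \<Rightarrow> real) \<Rightarrow> real" where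
  "Phi d p q n \<phi> = (\<Sum>z\<in>{-1..int d - 1}. W d p q n z * \<phi> z)"

lemma sum_shift_int: "(\<Sum>z\<in>{a..b::int}. f z) = (\<Sum>y\<in>{a-1..b-1}. f (y + 1))"
  by (rule sum.reindex_bij_witness[of _ "\<lambda>y. y + 1" "\<lambda>z. z - 1"]) auto

lemma sum_top_int: "a \<le> b + 1 \<Longrightarrow> (\<Sum>z\<in>{a..b+1::int}. f z) = (\<Sum>z\<in>{a..b}. f z) + f (b + 1)"
proof -
  assume "a \<le> b + 1"
  then have "{a..b+1} = insert (b+1) {a..b}" by auto
  then show ?thesis by (simp add: add.commute)
qed

lemma sum_bot_int: "a \<le> b \<Longrightarrow> (\<Sum>z\<in>{a..b::int}. f z) = f a + (\<Sum>z\<in>{a+1..b}. f z)"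
proof -
  assume "a \<le> b"
  then have "{a..b} = insert a {a+1..b}" by auto
  then show ?thesis by simp
qed

lemma Phi_Suc:
  assumes d: "d \<ge> 1" and h: "\<And>z. -1 \<le> z \<Longrightarrow> z \<le> int d - 1 \<Longrightarrow> p * \<phi> (z + 1) + q * \<phi> (z - 1) = \<phi> z + c"
  shows "Phi d p q (Suc n) \<phi> = Phi d p q n \<phi> + c * Phi d p q n (\<lambda>_. 1)
     - p * W d p q n (int d - 1) * \<phi> (int d) - q * W d p q n (-1) * \<phi> (-2)"
proof -
  define D where "D = int d - 1"
  have D: "D \<ge> 0" "int d = D + 1" using d by (auto simp: D_def)
  let ?I = "{-1..D}"
  let ?w = "W d p q n"
  have w0: "?w (-2) = 0" "?w (D + 1) = 0" by (auto simp: W_out D_def)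
  have S1: "(\<Sum>z\<in>?I. ?w (z - 1) * \<phi> z) = (\<Sum>y\<in>?I. ?w y * \<phi> (y + 1)) - ?w D * \<phi> (D + 1)"
  proof -
    have "(\<Sum>z\<in>{-1..D+1}. ?w (z - 1) * \<phi> z) = (\<Sum>z\<in>?I. ?w (z - 1) * \<phi> z) + ?w D * \<phi> (D + 1)"
      using D by (subst sum_top_int) auto
    moreover have "(\<Sum>z\<in>{-1..D+1}. ?w (z - 1) * \<phi> z) = (\<Sum>y\<in>{-2..D}. ?w y * \<phi> (y + 1))"
      by (subst sum_shift_int) simp
    moreover have "(\<Sum>y\<in>{-2..D}. ?w y * \<phi> (y + 1)) = (\<Sum>y\<in>?I. ?w y * \<phi> (y + 1))"
      using D w0 by (subst sum_bot_int) auto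
    ultimately show ?thesis by linarith
  qed
  have S2: "(\<Sum>z\<in>?I. ?w (z + 1) * \<phi> z) = (\<Sum>y\<in>?I. ?w y * \<phi> (y - 1)) - ?w (-1) * \<phi> (-2)"
  proof -
    have "(\<Sum>z\<in>{-2..D}. ?w (z + 1) * \<phi> z) = ?w (-1) * \<phi> (-2) + (\<Sum>z\<in>?I. ?w (z + 1) * \<phi> z)"
      using D by (subst sum_bot_int) auto
    moreover have "(\<Sum>z\<in>{-2..D}. ?w (z + 1) * \<phi> z) = (\<Sum>y\<in>{-1..D+1}. ?w y * \<phi> (y - 1))"
      by (subst sum_shift_int[of _ "-1" "D+1"]) simp
    moreover have "(\<Sum>y\<in>{-1..D+1}. ?w y * \<phi> (y - 1)) = (\<Sum>y\<in>?I. ?w y * \<phi> (y - 1))"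
      using D w0 by (subst sum_top_int) auto
    ultimately show ?thesis by linarith
  qed
  have "Phi d p q (Suc n) \<phi> = (\<Sum>z\<in>?I. (p * ?w (z - 1) + q * ?w (z + 1)) * \<phi> z)"
    unfolding Phi_def D_def by (intro sum.cong) (auto simp: W_Suc)
  also have "\<dots> = p * (\<Sum>z\<in>?I. ?w (z - 1) * \<phi> z) + q * (\<Sum>z\<in>?I. ?w (z + 1) * \<phi> z)"
    by (simp add: sum.distrib sum_distrib_left algebra_simps)
  also have "\<dots> = (\<Sum>y\<in>?I. ?w y * (p * \<phi> (y + 1) + q * \<phi> (y - 1))) - p * ?w D * \<phi> (D + 1) - q * ?w (-1) * \<phi> (-2)"
    unfolding S1 S2 by (simp add: sum.distrib sum_distrib_left algebra_simps)
  also have "(\<Sum>y\<in>?I. ?w y * (p * \<phi> (y + 1) + q * \<phi> (y - 1))) = (\<Sum>y\<in>?I. ?w y * \<phi> y) + c * (\<Sum>y\<in>?I. ?w y)"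
    using h by (simp add: D_def sum.distrib sum_distrib_left algebra_simps)
  finally show ?thesis unfolding Phi_def D_def by (simp add: D_def[symmetric] D(2))
qed




context
  fixes d :: nat and p q :: real
  assumes d: "d \<ge> 1" and q: "0 < q" and pq: "q < p" and sum1: "p + q = 1"
begin

abbreviation "MM n \<equiv> Phi d p q n (\<lambda>_. 1)"
abbreviation "aa n \<equiv> p * W d p q n (int d - 1)"
abbreviation "bb n \<equiv> q * W d p q n (-1)"

lemma p_pos: "0 < p" using q pq by simp

lemma Wnn: "0 \<le> W d p q n z" using W_nonneg[of p q] q p_pos by simp

lemma Phi_0: "Phi d p q 0 \<phi> = \<phi> 0"
proof -
  have "Phi d p q 0 \<phi> = (\<Sum>z\<in>{-1..int d - 1}. (if z = 0 then \<phi> z else 0))"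
    unfolding Phi_def using d by (intro sum.cong) (auto simp: W_0)
  also have "\<dots> = \<phi> 0" using d by (subst sum.delta) auto
  finally show ?thesis .
qed

lemma Phi_bound: "\<bar>Phi d p q n \<phi>\<bar> \<le> (\<Sum>y\<in>{-1..int d - 1}. \<bar>\<phi> y\<bar>) * MM n"
proof -
  let ?C = "\<Sum>y\<in>{-1..int d - 1}. \<bar>\<phi> y\<bar>"
  have "\<bar>Phi d p q n \<phi>\<bar> \<le> (\<Sum>z\<in>{-1..int d - 1}. \<bar>W d p q n z * \<phi> z\<bar>)"
    unfolding Phi_def by (rule sum_abs)
  also have "\<dots> \<le> (\<Sum>z\<in>{-1..int d - 1}. W d p q n z * ?C)"
  proof (intro sum_mono)
    fix z assume z: "z \<in> {-1..int d - 1}"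
    have "\<bar>\<phi> z\<bar> \<le> ?C" by (rule member_le_sum) (use z in auto)
    then show "\<bar>W d p q n z * \<phi> z\<bar> \<le> W d p q n z * ?C"
      using Wnn[of n z] by (simp add: abs_mult mult_left_mono)
  qed
  also have "\<dots> = ?C * MM n" unfolding Phi_def by (simp add: sum_distrib_left mult.commute)
  finally show ?thesis .
qed

lemma MM_Suc: "MM (Suc n) = MM n - aa n - bb n"
  using Phi_Suc[OF d, of p "\<lambda>_. 1" q 0 n] sum1 by simp

lemma MM_nn: "0 \<le> MM n"
  unfolding Phi_def using Wnn by (intro sum_nonneg) auto

lemma aa_nn: "0 \<le> aa n" and bb_nn: "0 \<le> bb n"
  using Wnn p_pos q by auto

lemma MM_partial: "MM n = 1 - (\<Sum>k<n. aa k + bb k)"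
  by (induction n) (auto simp: MM_Suc Phi_0)

lemma LL_partial: "Phi d p q n of_int = (p - q) * (\<Sum>k<n. MM k) - real d * (\<Sum>k<n. aa k) + 2 * (\<Sum>k<n. bb k)"
proof (induction n)
  case 0 then show ?case by (simp add: Phi_0)
next
  case (Suc n)
  have h: "p * real_of_int (z + 1) + q * real_of_int (z - 1) = real_of_int z + (p - q)" for z
  proof -
    have "p * real_of_int (z + 1) + q * real_of_int (z - 1) = (p + q) * real_of_int z + (p - q)"
      by (simp add: algebra_simps)
    then show ?thesis using sum1 by simp
  qed
  have "Phi d p q (Suc n) of_int = Phi d p q n of_int + (p - q) * MM n - aa n * real d + 2 * bb n"
    using Phi_Suc[OF d, of p "of_int" q "p - q" n] h by (simp add: algebra_simps)
  then show ?case using Suc by (simp add: algebra_simps)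
qed

lemma MM_summable: "summable MM"
proof (rule summableI_nonneg_bounded)
  show "0 \<le> MM n" for n by (rule MM_nn)
  let ?C = "\<Sum>y\<in>{-1..int d - 1}. \<bar>real_of_int y\<bar>"
  fix n
  have s1: "(\<Sum>k<n. aa k) \<le> 1"
  proof -
    have "(\<Sum>k<n. aa k) \<le> (\<Sum>k<n. aa k + bb k)" using bb_nn by (intro sum_mono) auto
    also have "\<dots> \<le> 1" using MM_partial[of n] MM_nn[of n] by linarith
    finally show ?thesis .
  qed
  have s2: "0 \<le> (\<Sum>k<n. bb k)" using bb_nn by (intro sum_nonneg) auto
  have "MM n \<le> 1" using MM_partial[of n] aa_nn bb_nn by (smt (verit) sum_nonneg)
  then have L: "Phi d p q n of_int \<le> ?C"
    using Phi_bound[of n of_int] by (smt (verit) mult_left_le sum_nonneg abs_ge_zero)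
  have "(p - q) * (\<Sum>k<n. MM k) \<le> ?C + real d"
    using LL_partial[of n] L s1 s2 by (smt (verit) mult_left_le of_nat_0_le_iff)
  then show "(\<Sum>k<n. MM k) \<le> (?C + real d) / (p - q)"
    using pq by (simp add: field_simps)
qed

lemma MM_lim: "MM \<longlonglongrightarrow> 0"
  by (rule summable_LIMSEQ_zero[OF MM_summable])

lemma ab_sums: "(\<lambda>n. aa n + bb n) sums 1"
proof -
  have "(\<lambda>n. MM n - MM (Suc n)) sums (MM 0 - 0)" by (rule telescope_sums'[OF MM_lim])
  then show ?thesis by (simp add: MM_Suc Phi_0)
qed

definition rr where "rr = q / p"

lemma rr_pos: "0 < rr" and rr_less: "rr < 1"
  using q pq p_pos by (auto simp: rr_def)

lemma EE_Suc: "Phi d p q (Suc n) (\<lambda>z. rr powi z) = Phi d p q n (\<lambda>z. rr powi z)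
   - aa n * rr ^ d - bb n * rr powi (-2)"
proof -
  have h: "p * rr powi (z + 1) + q * rr powi (z - 1) = rr powi z + 0" for z
  proof -
    have "rr powi (z + 1) = rr powi z * rr" using rr_pos by (simp add: power_int_add)
    moreover have "rr powi (z - 1) = rr powi z / rr" using rr_pos
      by (simp add: power_int_diff)
    ultimately have "p * rr powi (z + 1) = q * rr powi z" "q * rr powi (z - 1) = p * rr powi z"
      using p_pos q by (simp_all add: rr_def field_simps)
    then have "p * rr powi (z + 1) + q * rr powi (z - 1) = (p + q) * rr powi z"
      by (simp add: algebra_simps)
    then show ?thesis using sum1 by simp
  qed
  show ?thesis using Phi_Suc[OF d, of p "\<lambda>z. rr powi z" q 0 n] h
    by (simp add: power_int_of_nat algebra_simps)
qed

lemma EE_lim: "(\<lambda>n. Phi d p q n (\<lambda>z. rr powi z)) \<longlonglongrightarrow> 0"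
proof (rule tendsto_0_le[OF MM_lim])
  let ?C = "\<Sum>y\<in>{-1..int d - 1}. \<bar>rr powi y\<bar>"
  show "\<forall>\<^sub>F n in sequentially. norm (Phi d p q n (\<lambda>z. rr powi z)) \<le> norm (MM n) * ?C"
    using Phi_bound MM_nn by (simp add: mult.commute)
qed

lemma E_sums: "(\<lambda>n. aa n * rr ^ d + bb n * rr powi (-2)) sums 1"
proof -
  have "(\<lambda>n. Phi d p q n (\<lambda>z. rr powi z) - Phi d p q (Suc n) (\<lambda>z. rr powi z)) sums
      (Phi d p q 0 (\<lambda>z. rr powi z) - 0)" by (rule telescope_sums'[OF EE_lim])
  then show ?thesis by (simp add: EE_Suc Phi_0)
qed

lemma aa_sums: "aa sums ((1 - rr^2) / (1 - rr^(d+2)))"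
proof -
  have sa: "summable aa"
    by (rule summable_comparison_test[OF _ sums_summable[OF ab_sums]]) (use aa_nn bb_nn in auto)
  have sb: "summable bb"
    by (rule summable_comparison_test[OF _ sums_summable[OF ab_sums]]) (use aa_nn bb_nn in auto)
  define A where "A = suminf aa"
  define B where "B = suminf bb"
  have e1: "A + B = 1" using sums_unique2[OF ab_sums sums_add[OF summable_sums[OF sa] summable_sums[OF sb]]]
    by (simp add: A_def B_def)
  have e2: "A * rr ^ d + B * rr powi (-2) = 1"
    using sums_unique2[OF E_sums sums_add[OF sums_mult2[OF summable_sums[OF sa]] sums_mult2[OF summable_sums[OF sb]]]]
    by (simp add: A_def B_def)
  have m2: "rr powi (-2) = 1 / rr^2" by (simp add: power_int_minus field_simps)
  have "A * rr ^ d * rr^2 + B = rr^2" using e2 rr_pos unfolding m2 by (simp add: field_simps)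
  moreover have "A * (rr^(d+2) - 1) = A * rr ^ d * rr^2 - A" by (simp add: power_add power2_eq_square algebra_simps)
  ultimately have "A * (rr^(d+2) - 1) = rr^2 - 1" using e1 by linarith
  moreover have "rr^(d+2) < 1" using rr_pos rr_less using power_Suc_less_one[of rr "Suc d"] by simp
  ultimately have "A = (1 - rr^2) / (1 - rr^(d+2))" by (simp add: field_simps)
  then show ?thesis using summable_sums[OF sa] A_def by simp
qed

end



lemma cond_zv: "(fst (path_pt ps k) - 2 < snd (path_pt ps k) \<and> snd (path_pt ps k) < fst (path_pt ps k) + int d)
   \<longleftrightarrow> (-1 \<le> zv (take k ps) \<and> zv (take k ps) \<le> int d - 1)"
  unfolding path_pt_def zv_def by auto

lemma SS_counts:
  assumes "ps \<in> SS d n (int d - 1)"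
  shows "int (length (filter Not ps)) * 2 + int d - 1 = int n"
    "int (length (filter id ps)) = int (length (filter Not ps)) + int d - 1"
  using assms len_TF[of ps] unfolding SS_def zv_def by auto

lemma SS_parity: "d \<ge> 1 \<Longrightarrow> ps \<in> SS d n (int d - 1) \<Longrightarrow> n = 2 * length (filter Not ps) + d - 1"
  using SS_counts(1)[of ps d n] by linarith

lemma G_paths_eq:
  assumes d: "d \<ge> 1"
  shows "G_paths d s = (\<lambda>ps. ps @ [True]) ` SS d (2 * s + d - 1) (int d - 1)"
proof (intro equalityI subsetI)
  fix ps assume ps: "ps \<in> G_paths d s"
  then have len: "length ps = 2 * s + d" and pt: "path_pt ps (length ps) = (int s, int (s + d))"
    and cnd: "\<And>k. k < length ps \<Longrightarrow> -1 \<le> zv (take k ps) \<and> zv (take k ps) \<le> int d - 1"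
    unfolding G_paths_def using cond_zv by auto
  have "ps \<noteq> []" using len d by auto
  then obtain xs b where xb: "ps = xs @ [b]" by (metis rev_exhaust)
  have okx: "okp d xs" unfolding okp_def
  proof (intro allI impI)
    fix k assume "k \<le> length xs"
    then show "-1 \<le> zv (take k xs) \<and> zv (take k xs) \<le> int d - 1"
      using cnd[of k] xb by simp
  qed
  have zps: "zv ps = int d" using pt unfolding path_pt_def zv_def by auto
  have zx: "zv xs \<le> int d - 1" using cnd[of "length xs"] xb by simp
  have bT: "b = True" and zx2: "zv xs = int d - 1"
    using zps zx zv_snoc[of xs b] xb by (auto split: if_splits)
  have "length xs = 2 * s + d - 1" using len xb by simp
  then have "xs \<in> SS d (2 * s + d - 1) (int d - 1)" using okx zx2 by (simp add: SS_def)
  then show "ps \<in> (\<lambda>ps. ps @ [True]) ` SS d (2 * s + d - 1) (int d - 1)" using xb bT by blast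
next
  fix ps assume "ps \<in> (\<lambda>ps. ps @ [True]) ` SS d (2 * s + d - 1) (int d - 1)"
  then obtain xs where ps: "ps = xs @ [True]" and xs: "xs \<in> SS d (2 * s + d - 1) (int d - 1)" by blast
  have lx: "length xs = 2 * s + d - 1" and okx: "okp d xs" using xs by (auto simp: SS_def)
  have c1: "int (length (filter Not xs)) = int s" using SS_counts(1)[OF xs] d by linarith
  have c2: "int (length (filter id xs)) = int s + int d - 1" using SS_counts(2)[OF xs] c1 by linarith
  have len: "length ps = 2 * s + d" using lx ps d by simp
  have pt: "path_pt ps (length ps) = (int s, int (s + d))"
    using c1 c2 ps d unfolding path_pt_def by simp
  have cnd: "fst (path_pt ps k) - 2 < snd (path_pt ps k) \<and> snd (path_pt ps k) < fst (path_pt ps k) + int d"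
    if "k < length ps" for k
  proof -
    have "k \<le> length xs" using that ps by simp
    then have "take k ps = take k xs" using ps by simp
    then show ?thesis unfolding cond_zv using okx \<open>k \<le> length xs\<close> unfolding okp_def by simp
  qed
  show "ps \<in> G_paths d s" unfolding G_paths_def using len pt cnd by blast
qed

lemma G_W:
  assumes d: "d \<ge> 1"
  shows "p * W d p q (2 * s + d - 1) (int d - 1) = real (G d s) * p ^ d * (p * q) ^ s"
proof -
  have inj: "inj_on (\<lambda>ps. ps @ [True]) A" for A by (auto simp: inj_on_def)
  have fin: "finite (G_paths d s)" unfolding G_paths_eq[OF d] using finite_SS by simp
  have "p * W d p q (2 * s + d - 1) (int d - 1) = (\<Sum>ps\<in>G_paths d s. wt p q ps)"
    unfolding G_paths_eq[OF d] W_def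
    by (simp add: sum.reindex[OF inj] wt_snoc sum_distrib_left mult.commute)
  also have "\<dots> = (\<Sum>ps\<in>G_paths d s. p ^ (s + d) * q ^ s)"
  proof (intro sum.cong refl)
    fix ps assume "ps \<in> G_paths d s"
    then have "path_pt ps (length ps) = (int s, int (s + d))" unfolding G_paths_def by auto
    then have "length (filter Not ps) = s" "length (filter id ps) = s + d"
      unfolding path_pt_def by auto
    then show "wt p q ps = p ^ (s + d) * q ^ s" by (simp add: wt_def)
  qed
  also have "\<dots> = real (G d s) * p ^ d * (p * q) ^ s"
    by (simp add: G_def power_add power_mult_distrib algebra_simps)
  finally show ?thesis .
qed

lemma part1:
  fixes d :: nat and \<alpha> :: real
  assumes d: "d \<ge> 1" and a0: "0 < \<alpha>" and a1: "\<alpha> < 1/2"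
  shows "(\<lambda>s. real (G d s) * (\<alpha> * (1 - \<alpha>)) ^ s) sums
            ((1 - 2 * \<alpha>) / ((1 - \<alpha>) ^ (d + 2) - \<alpha> ^ (d + 2)))"
proof -
  define p where "p = 1 - \<alpha>"
  define q where "q = \<alpha>"
  have q: "0 < q" "q < p" "p + q = 1" using a0 a1 by (auto simp: p_def q_def)
  have pp: "0 < p" using q by simp
  let ?X = "(1 - rr p q ^ 2) / (1 - rr p q ^ (d + 2))"
  have S: "(\<lambda>n. p * W d p q n (int d - 1)) sums ?X" by (rule aa_sums[OF d q])
  have sm: "strict_mono (\<lambda>s. 2 * s + d - 1)" using d by (auto simp: strict_mono_def)
  have zero: "p * W d p q n (int d - 1) = 0" if "n \<notin> range (\<lambda>s. 2 * s + d - 1)" for n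
  proof -
    have "SS d n (int d - 1) = {}"
    proof (rule ccontr)
      assume "SS d n (int d - 1) \<noteq> {}"
      then obtain ps where "ps \<in> SS d n (int d - 1)" by blast
      then have "n = 2 * length (filter Not ps) + d - 1" using SS_parity d by blast
      then show False using that by blast
    qed
    then show ?thesis by (simp add: W_def)
  qed
  have "(\<lambda>s. p * W d p q (2 * s + d - 1) (int d - 1)) sums ?X"
    using sums_mono_reindex[OF sm, of "\<lambda>n. p * W d p q n (int d - 1)"] zero S by auto
  moreover have "(\<lambda>s. p * W d p q (2 * s + d - 1) (int d - 1)) = (\<lambda>s. real (G d s) * p ^ d * (p * q) ^ s)"
    by (rule ext) (rule G_W[OF d])
  ultimately have "(\<lambda>s. real (G d s) * p ^ d * (p * q) ^ s) sums ?X" by simp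
  then have "(\<lambda>s. real (G d s) * p ^ d * (p * q) ^ s / p ^ d) sums (?X / p ^ d)" by (rule sums_divide)
  then have S2: "(\<lambda>s. real (G d s) * (\<alpha> * (1 - \<alpha>)) ^ s) sums (?X / p ^ d)"
    using pp by (simp add: p_def q_def mult.commute)
  have D: "\<alpha> ^ (d + 2) < (1 - \<alpha>) ^ (d + 2)" using a0 a1 by (intro power_strict_mono) auto
  have "?X / p ^ d = (1 - 2 * \<alpha>) / ((1 - \<alpha>) ^ (d + 2) - \<alpha> ^ (d + 2))"
  proof -
    have "rr p q = q / p" by (rule rr_def[OF d q])
    then have r: "rr p q = \<alpha> / (1 - \<alpha>)" by (simp add: p_def q_def)
    have pd: "(1 - \<alpha>) ^ (d + 2) = (1 - \<alpha>)^d * (1 - \<alpha>)^2" by (simp add: power_add power2_eq_square)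
    have n0: "(1 - \<alpha>)^d * (1 - \<alpha>)^2 - \<alpha> ^ (d + 2) \<noteq> 0" using D unfolding pd by linarith
    have alg: "\<And>x y P T::real. x \<noteq> 0 \<Longrightarrow> P \<noteq> 0 \<Longrightarrow> P * x - T \<noteq> 0 \<Longrightarrow>
        (1 - y / x) / (1 - T / (P * x)) / P = (x - y) / (P * x - T)"
      by (simp add: field_simps)
    have "?X / p ^ d = (1 - \<alpha>^2 / (1 - \<alpha>)^2) / (1 - \<alpha> ^ (d + 2) / ((1 - \<alpha>)^d * (1 - \<alpha>)^2)) / (1 - \<alpha>)^d"
      unfolding r by (simp add: p_def power_divide power2_eq_square)
    also have "\<dots> = ((1 - \<alpha>)^2 - \<alpha>^2) / ((1 - \<alpha>)^d * (1 - \<alpha>)^2 - \<alpha> ^ (d + 2))"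
      by (rule alg) (use a1 n0 in auto)
    also have "(1 - \<alpha>)^2 - \<alpha>^2 = 1 - 2 * \<alpha>" by (simp add: power2_eq_square algebra_simps)
    finally show ?thesis unfolding pd .
  qed
  then show ?thesis using S2 by simp
qed




lemma part2:
  fixes d :: nat and \<alpha> :: real
  assumes d: "d \<ge> 1" and a0: "0 < \<alpha>" and a1: "\<alpha> < 1/2"
  shows "(\<lambda>s. real s * real (G d s) * (\<alpha> * (1 - \<alpha>)) ^ s) sums
            ((real d + 2) * \<alpha> * (1 - \<alpha>) * ((1 - \<alpha>) ^ (d + 1) + \<alpha> ^ (d + 1))
               / ((1 - \<alpha>) ^ (d + 2) - \<alpha> ^ (d + 2)) ^ 2
             - 2 * \<alpha> * (1 - \<alpha>) / ((1 - 2 * \<alpha>) * ((1 - \<alpha>) ^ (d + 2) - \<alpha> ^ (d + 2))))"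
proof -
  define c where "c n = real (G d n)" for n
  define F where "F x = (\<Sum>n. c n * x ^ n)" for x :: real
  define D where "D a = (1 - a) ^ (d + 2) - a ^ (d + 2)" for a :: real
  define f where "f a = (1 - 2 * a) / D a" for a
  have P1: "(\<lambda>s. c s * (b * (1 - b)) ^ s) sums f b" if "0 < b" "b < 1/2" for b
    using part1[OF d that] by (simp add: c_def f_def D_def)
  define x0 where "x0 = \<alpha> * (1 - \<alpha>)"
  define \<beta> where "\<beta> = (\<alpha> + 1/2) / 2"
  define K where "K = \<beta> * (1 - \<beta>)"
  have b0: "0 < \<beta>" "\<beta> < 1/2" "\<alpha> < \<beta>" using a0 a1 by (auto simp: \<beta>_def)
  have x0p: "0 < x0" using a0 a1 by (simp add: x0_def)
  have "K - x0 = (\<beta> - \<alpha>) * (1 - \<alpha> - \<beta>)" by (simp add: K_def x0_def algebra_simps)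
  moreover have "0 < (\<beta> - \<alpha>) * (1 - \<alpha> - \<beta>)" using b0 a1 by (intro mult_pos_pos) auto
  ultimately have x0K: "x0 < K" by linarith
  have smK: "summable (\<lambda>n. c n * K ^ n)" using P1[OF b0(1,2)] by (auto simp: K_def sums_iff)
  have nK: "norm x0 < norm K" using x0p x0K by simp
  have smx: "summable (\<lambda>n. c n * x ^ n)" if "norm x < K" for x
    by (rule powser_inside[OF smK]) (use that x0p x0K in auto)
  define F' where "F' = (\<Sum>n. diffs c n * x0 ^ n)"
  have dF: "DERIV F x0 :> F'" unfolding F_def F'_def by (rule termdiffs_strong[OF smK nK])
  have sd: "summable (\<lambda>n. diffs c n * x0 ^ n)"
    by (rule termdiff_converges[of x0 K]) (use x0p x0K smx in auto)
  have dx: "((\<lambda>a. a * (1 - a)) has_field_derivative (1 - 2 * \<alpha>)) (at \<alpha>)"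
    by (auto intro!: derivative_eq_intros)
  have dFx: "((\<lambda>a. F (a * (1 - a))) has_field_derivative F' * (1 - 2 * \<alpha>)) (at \<alpha>)"
    using DERIV_chain2[OF _ dx, of F F'] dF by (simp add: x0_def)
  have dfa: "(f has_field_derivative F' * (1 - 2 * \<alpha>)) (at \<alpha>)"
  proof (rule has_field_derivative_transform_within_open[OF dFx, of "{0<..<1/2}"])
    show "open {0<..<1/2::real}" by simp
    show "\<alpha> \<in> {0<..<1/2}" using a0 a1 by simp
    fix x :: real assume "x \<in> {0<..<1/2}"
    then show "F (x * (1 - x)) = f x" using P1[of x] by (simp add: F_def sums_iff)
  qed
  define Dp where "Dp = - (real d + 2) * ((1 - \<alpha>) ^ (d + 1) + \<alpha> ^ (d + 1))"
  have dD0: "(D has_field_derivative (of_nat (d+2) * ((0 - 1) * (1 - \<alpha>) ^ (d + 2 - Suc 0))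
       - of_nat (d+2) * (1 * \<alpha> ^ (d + 2 - Suc 0)))) (at \<alpha>)"
    unfolding D_def[abs_def]
    by (intro DERIV_diff DERIV_power DERIV_ident DERIV_const)
  have "of_nat (d+2) * ((0 - 1) * (1 - \<alpha>) ^ (d + 2 - Suc 0)) - of_nat (d+2) * (1 * \<alpha> ^ (d + 2 - Suc 0)) = Dp"
    unfolding Dp_def by (simp add: algebra_simps)
  with dD0 have dD: "(D has_field_derivative Dp) (at \<alpha>)" by simp
  have "\<alpha> ^ (d + 2) < (1 - \<alpha>) ^ (d + 2)" using a0 a1 by (intro power_strict_mono) auto
  then have Dpos: "0 < D \<alpha>" unfolding D_def by simp
  have d1: "((\<lambda>a. 1 - 2 * a) has_field_derivative -2) (at \<alpha>)"
    by (auto intro!: derivative_eq_intros)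
  have df2: "(f has_field_derivative ((-2) * D \<alpha> - Dp * (1 - 2 * \<alpha>)) / (D \<alpha> ^ Suc (Suc 0))) (at \<alpha>)"
    unfolding f_def[abs_def] using DERIV_quotient[OF d1 dD] Dpos by simp
  have eq: "F' * (1 - 2 * \<alpha>) = ((-2) * D \<alpha> - Dp * (1 - 2 * \<alpha>)) / (D \<alpha> ^ Suc (Suc 0))"
    by (rule DERIV_unique[OF dfa df2])
  have "(\<lambda>n. diffs c n * x0 ^ n * x0) sums (F' * x0)"
    using sums_mult2[OF summable_sums[OF sd], of x0] by (simp add: F'_def)
  then have "(\<lambda>n. real (Suc n) * c (Suc n) * x0 ^ Suc n) sums (F' * x0)"
    by (simp add: diffs_def algebra_simps)
  then have S: "(\<lambda>n. real n * c n * x0 ^ n) sums (F' * x0)"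
    using sums_Suc_iff[of "\<lambda>n. real n * c n * x0 ^ n"] by simp
  have ne: "1 - 2 * \<alpha> \<noteq> 0" using a1 by simp
  have "F' * x0 = x0 * (((-2) * D \<alpha> - Dp * (1 - 2 * \<alpha>)) / (D \<alpha> ^ Suc (Suc 0))) / (1 - 2 * \<alpha>)"
  proof -
    have "F' = (F' * (1 - 2 * \<alpha>)) / (1 - 2 * \<alpha>)" using ne by simp
    then show ?thesis unfolding eq by simp
  qed
  also have "\<dots> = (real d + 2) * \<alpha> * (1 - \<alpha>) * ((1 - \<alpha>) ^ (d + 1) + \<alpha> ^ (d + 1))
               / ((1 - \<alpha>) ^ (d + 2) - \<alpha> ^ (d + 2)) ^ 2
             - 2 * \<alpha> * (1 - \<alpha>) / ((1 - 2 * \<alpha>) * ((1 - \<alpha>) ^ (d + 2) - \<alpha> ^ (d + 2)))"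
    using ne Dpos unfolding D_def[symmetric] Dp_def x0_def
    by (simp add: field_simps power2_eq_square)
  finally show ?thesis using S by (simp add: c_def x0_def)
qed



theorem lemma3:
  fixes d :: nat and \<alpha> :: real
  assumes "d \<ge> 1" and "0 < \<alpha>" and "\<alpha> < 1/2"
  shows "((\<lambda>s. real (G d s) * (\<alpha> * (1 - \<alpha>)) ^ s) sums
            ((1 - 2 * \<alpha>) / ((1 - \<alpha>) ^ (d + 2) - \<alpha> ^ (d + 2))))
     \<and> ((\<lambda>s. real s * real (G d s) * (\<alpha> * (1 - \<alpha>)) ^ s) sums
            ((real d + 2) * \<alpha> * (1 - \<alpha>) * ((1 - \<alpha>) ^ (d + 1) + \<alpha> ^ (d + 1))
               / ((1 - \<alpha>) ^ (d + 2) - \<alpha> ^ (d + 2)) ^ 2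
             - 2 * \<alpha> * (1 - \<alpha>) / ((1 - 2 * \<alpha>) * ((1 - \<alpha>) ^ (d + 2) - \<alpha> ^ (d + 2)))))"
  using part1[OF assms] part2[OF assms] by blast

end
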